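(* Consider the problem and algorithm AC2CD described in the context. At every inner iteration $(k,i)$, with $p=p^k_i$ and $j=j(k)$: (a) if $\Delta^{k,i} \le \frac{2(1-\gamma)}{L_{p,j}}$, then $\alpha^{k,i} = \Delta^{k,i}$; (b) if $\Delta^{k,i} > \frac{2(1-\gamma)}{L_{p,j}}$, then $\alpha^{k,i} \in \bigl(\frac{2\delta(1-\gamma)}{L_{p,j}}, \Delta^{k,i}\bigr]$. Consequently $\alpha^{k,i} \ge \min\bigl\{\Delta^{k,i}, \frac{2\delta(1-\gamma)}{L_{p,j}}\bigr\}$.
   Context: Problem: minimize $f(x)$ subject to $e^T x = b$ and $l_i \le x_i \le u_i$ ($i=1,\dots,n$), where $n\ge 2$, $e\in\mathbb{R}^n$ is the all-ones vector, $b\in\mathbb{R}$, $l_i\in\mathbb{R}\cup\{-\infty\}$, $u_i\in\mathbb{R}\cup\{+\infty\}$, $l_i<u_i$, and $f:\mathbb{R}^n\to\mathbb{R}$ is continuously differentiable with $\nabla f$ Lipschitz continuous on $\mathbb{R}^n$ with constant $L$. $\mathcal F$ is the feasible set and $e_i$ the $i$th unit vector. For $i\ne j$, $L_{i,j}>0$ are fixed constants such that for every $x\in\mathbb{R}^n$ and $s,t\in\mathbb{R}$, $|\nabla f(x+s(e_i-e_j))^T(e_i-e_j)-\nabla f(x+t(e_i-e_j))^T(e_i-e_j)|\le L_{i,j}|s-t|$; $L_{i,i}=0$ (and $c/0$ is read as $+\infty$ for $c>0$). For $x\in\mathcal F$, $D_h(x)=\min\{x_h-l_h,u_h-x_h\}$.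 Algorithm AC2CD with parameters $\tau\in(0,1]$, $\gamma,\delta\in(0,1)$, $0<A_l\le A_u<\infty$ and starting point $x^0\in\mathcal F$: for $k=0,1,2,\dots$ (outer iterations): let $D^k=\max_h D_h(x^k)$; choose an index $j(k)$ with $D_{j(k)}(x^k)\ge\tau D^k$; choose a permutation $(p^k_1,\dots,p^k_n)$ of $\{1,\dots,n\}$; set $z^{k,1}=x^k$; for $i=1,\dots,n$ (inner iteration $(k,i)$): set $g^{k,i}=\nabla_{j(k)}f(z^{k,i})-\nabla_{p^k_i}f(z^{k,i})$ and $d^{k,i}=g^{k,i}(e_{p^k_i}-e_{j(k)})$; let $\bar\alpha^{k,i}=\min\{u_{p^k_i}-z^{k,i}_{p^k_i},\,z^{k,i}_{j(k)}-l_{j(k)}\}/g^{k,i}$ if $g^{k,i}>0$, $\bar\alpha^{k,i}=\min\{z^{k,i}_{p^k_i}-l_{p^k_i},\,u_{j(k)}-z^{k,i}_{j(k)}\}/|g^{k,i}|$ if $g^{k,i}<0$, and $\bar\alpha^{k,i}=0$ if $g^{k,i}=0$; choose $A^{k,i}\in[A_l,A_u]$ and set $\Delta^{k,i}=\min\{\bar\alpha^{k,i},A^{k,i}\}$; Armijo line search: start with $\alpha=\Delta^{k,i}$ and, while $f(z^{k,i}+\alpha d^{k,i})>f(z^{k,i})+\gamma\alpha\nabla f(z^{k,i})^Td^{k,i}$, replace $\alpha$ by $\delta\alpha$; let $\alpha^{k,i}$ be the final $\alpha$ and $z^{k,i+1}=z^{k,i}+\alpha^{k,i}d^{k,i}$.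 Finally $x^{k+1}=z^{k,n+1}$. Standing assumptions: the level set $\mathcal L_0=\{x\in\mathcal F: f(x)\le f(x^0)\}$ is nonempty and compact, and every $x\in\mathcal L_0$ has at least one index $i$ with $l_i<x_i<u_i$. *)

theory Defs
  imports "HOL-Analysis.Analysis" "HOL-Library.Extended_Real"
begin

definition feasible :: "ereal ^ 'n \<Rightarrow> ereal ^ 'n \<Rightarrow> real \<Rightarrow> (real ^ 'n::finite) set" where
  "feasible l u b = {x. (\<Sum>i\<in>UNIV. x $ i) = b \<and> (\<forall>i. l $ i \<le> ereal (x $ i) \<and> ereal (x $ i) \<le> u $ i)}"

definition Dist :: "ereal ^ 'n \<Rightarrow> ereal ^ 'n \<Rightarrow> real ^ 'n \<Rightarrow> 'n \<Rightarrow> ereal" where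
  "Dist l u x h = min (ereal (x $ h) - l $ h) (u $ h - ereal (x $ h))"

definition gval :: "(real ^ 'n \<Rightarrow> real ^ 'n) \<Rightarrow> real ^ 'n \<Rightarrow> 'n \<Rightarrow> 'n \<Rightarrow> real" where
  "gval grad z p j = grad z $ j - grad z $ p"

text \<open>Maximal feasible step alpha-bar (possibly +infinity when bounds are infinite).\<close>
definition alpha_bar :: "ereal ^ 'n \<Rightarrow> ereal ^ 'n \<Rightarrow> real ^ 'n \<Rightarrow> 'n \<Rightarrow> 'n \<Rightarrow> real \<Rightarrow> ereal" where
  "alpha_bar l u z p j g =
     (if g > 0 then min (u $ p - ereal (z $ p)) (ereal (z $ j) - l $ j) / ereal g
      else if g < 0 then min (ereal (z $ p) - l $ p) (u $ j - ereal (z $ j)) / ereal \<bar>g\<bar>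
      else 0)"

definition armijo :: "(real ^ 'n \<Rightarrow> real) \<Rightarrow> (real ^ 'n \<Rightarrow> real ^ 'n) \<Rightarrow> real ^ 'n \<Rightarrow> real ^ 'n
                      \<Rightarrow> real \<Rightarrow> real \<Rightarrow> real \<Rightarrow> real" where
  "armijo f grad z d Delta \<gamma> \<delta> =
     Delta * \<delta> ^ (LEAST m. f (z + (Delta * \<delta> ^ m) *\<^sub>R d) \<le> f z + \<gamma> * (Delta * \<delta> ^ m) * (grad z \<bullet> d))"

end

theory Submission
  imports Defs
begin



lemma descent_1d:
  fixes h h' :: "real \<Rightarrow> real"
  assumes der: "\<And>s. (h has_real_derivative h' s) (at s)"
    and lipo: "\<And>s. s \<ge> 0 \<Longrightarrow> h' s - h' 0 \<le> K * s"
    and t: "t \<ge> 0"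
  shows "h t \<le> h 0 + t * h' 0 + K * t\<^sup>2 / 2"
proof (cases "t = 0")
  case True then show ?thesis by simp
next
  case False
  then have tp: "0 < t" using t by simp
  define \<psi> where "\<psi> s = h s - h 0 - s * h' 0 - K * s\<^sup>2/2" for s
  have d: "DERIV \<psi> s :> (h' s - h' 0 - K * s)" for s
    unfolding \<psi>_def
    by (auto intro!: derivative_eq_intros der)
  obtain \<xi> where \<xi>: "0 < \<xi>" "\<xi> < t" "\<psi> t - \<psi> 0 = (t - 0) * (h' \<xi> - h' 0 - K * \<xi>)"
    using MVT2[OF tp, of \<psi> "\<lambda>s. h' s - h' 0 - K * s"] d by blast
  have "h' \<xi> - h' 0 - K * \<xi> \<le> 0" using lipo[of \<xi>] \<xi> by simp
  then have "\<psi> t - \<psi> 0 \<le> 0" using \<xi>(3) tp by (simp add: mult_nonneg_nonpos)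
  then show ?thesis unfolding \<psi>_def by simp
qed

lemma line_deriv:
  fixes f :: "real ^ 'n::finite \<Rightarrow> real"
  assumes deriv: "\<forall>y. (f has_derivative (\<lambda>h. grad y \<bullet> h)) (at y)"
  shows "((\<lambda>s. f (z + s *\<^sub>R d)) has_real_derivative (grad (z + s *\<^sub>R d) \<bullet> d)) (at s)"
proof -
  have a: "((\<lambda>s. z + s *\<^sub>R d) has_derivative (\<lambda>s. s *\<^sub>R d)) (at s)"
    by (auto intro!: derivative_eq_intros)
  have "((\<lambda>s. f (z + s *\<^sub>R d)) has_derivative (\<lambda>x. grad (z + s *\<^sub>R d) \<bullet> (x *\<^sub>R d))) (at s)"
    using has_derivative_compose[OF a deriv[rule_format]] by (simp add: o_def)
  then show ?thesis
    by (rule has_derivative_imp_has_field_derivative) (simp add: mult.commute)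
qed

lemma armijo_lemma:
  fixes f :: "real ^ 'n::finite \<Rightarrow> real"
  assumes deriv: "\<forall>y. (f has_derivative (\<lambda>h. grad y \<bullet> h)) (at y)"
    and Lij_pos: "\<forall>i j. i \<noteq> j \<longrightarrow> Lij i j > 0"
    and Lij_lip: "\<forall>i j y s t. \<bar>grad (y + s *\<^sub>R (axis i 1 - axis j 1)) \<bullet> (axis i 1 - axis j 1)
                                 - grad (y + t *\<^sub>R (axis i 1 - axis j 1)) \<bullet> (axis i 1 - axis j 1)\<bar>
                              \<le> Lij i j * \<bar>s - t\<bar>"
    and gam: "0 < \<gamma>" "\<gamma> < 1" and del: "0 < \<delta>" "\<delta> < 1"
    and D0: "0 \<le> Delta"
    and al: "\<alpha> = armijo f grad z (gval grad z p j *\<^sub>R (axis p 1 - axis j 1)) Delta \<gamma> \<delta>"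
  shows "0 \<le> \<alpha> \<and> \<alpha> \<le> Delta \<and>
           ((Lij p j = 0 \<or> Delta \<le> 2 * (1 - \<gamma>) / Lij p j) \<longrightarrow> \<alpha> = Delta)
           \<and> ((Lij p j \<noteq> 0 \<and> Delta > 2 * (1 - \<gamma>) / Lij p j) \<longrightarrow>
                 2 * \<delta> * (1 - \<gamma>) / Lij p j < \<alpha> \<and> \<alpha> \<le> Delta)
           \<and> \<alpha> \<ge> (if Lij p j = 0 then Delta else min Delta (2 * \<delta> * (1 - \<gamma>) / Lij p j))"
proof -
  define g where "g = gval grad z p j"
  define v :: "real ^ 'n" where "v = axis p 1 - axis j 1"
  define d where "d = g *\<^sub>R v"
  define K where "K = Lij p j"
  define P where "P m \<longleftrightarrow> f (z + (Delta * \<delta> ^ m) *\<^sub>R d) \<le> f z + \<gamma> * (Delta * \<delta> ^ m) * (grad z \<bullet> d)" for m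
  have al2: "\<alpha> = Delta * \<delta> ^ (LEAST m. P m)"
    unfolding al armijo_def P_def d_def v_def g_def by simp
  have gv: "grad z \<bullet> v = - g"
    unfolding v_def g_def gval_def by (simp add: inner_diff_right inner_axis)
  have gd: "grad z \<bullet> d = - (g\<^sup>2)"
    unfolding d_def using gv by (simp add: power2_eq_square)
  have K0: "K \<ge> 0"
  proof -
    have "\<bar>grad (z + 1 *\<^sub>R v) \<bullet> v - grad (z + 0 *\<^sub>R v) \<bullet> v\<bar> \<le> K * \<bar>1 - 0\<bar>"
      using Lij_lip[rule_format, where i=p and j=j and y=z and s=1 and t=0] unfolding v_def K_def by simp
    then have "\<bar>grad (z + 1 *\<^sub>R v) \<bullet> v - grad (z + 0 *\<^sub>R v) \<bullet> v\<bar> \<le> K" by simp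
    then show ?thesis by (meson abs_ge_zero order_trans)
  qed
  have Kg: "K = 0 \<Longrightarrow> g = 0"
  proof -
    assume "K = 0"
    then have "p = j" using Lij_pos unfolding K_def by force
    then show "g = 0" unfolding g_def gval_def by simp
  qed
  have desc: "f (z + \<beta> *\<^sub>R d) \<le> f z + \<beta> * (- (g\<^sup>2)) + K * g\<^sup>2 * \<beta>\<^sup>2 / 2" if b: "\<beta> \<ge> 0" for \<beta>
  proof -
    have "f (z + \<beta> *\<^sub>R d) \<le> f (z + 0 *\<^sub>R d) + \<beta> * (grad (z + 0 *\<^sub>R d) \<bullet> d) + (K * g\<^sup>2) * \<beta>\<^sup>2 / 2"
    proof (rule descent_1d[where h = "\<lambda>s. f (z + s *\<^sub>R d)" and h' = "\<lambda>s. grad (z + s *\<^sub>R d) \<bullet> d"])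
      show "((\<lambda>s. f (z + s *\<^sub>R d)) has_real_derivative grad (z + s *\<^sub>R d) \<bullet> d) (at s)" for s
        by (rule line_deriv[OF deriv])
      show "0 \<le> \<beta>" by (rule b)
      fix s :: real assume s: "0 \<le> s"
      have e: "z + s *\<^sub>R d = z + (s * g) *\<^sub>R v" unfolding d_def by simp
      have "\<bar>grad (z + (s * g) *\<^sub>R v) \<bullet> v - grad (z + 0 *\<^sub>R v) \<bullet> v\<bar> \<le> K * \<bar>s * g - 0\<bar>"
        using Lij_lip[rule_format, where i=p and j=j and y=z and s="s * g" and t=0] unfolding v_def K_def by simp
      then have "\<bar>g\<bar> * \<bar>grad (z + (s * g) *\<^sub>R v) \<bullet> v - grad z \<bullet> v\<bar> \<le> \<bar>g\<bar> * (K * \<bar>s * g\<bar>)"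
        by (simp add: mult_left_mono)
      also have "\<dots> = K * g\<^sup>2 * s" using s by (simp add: abs_mult power2_eq_square)
      finally have "\<bar>g * (grad (z + (s * g) *\<^sub>R v) \<bullet> v) - g * (grad z \<bullet> v)\<bar> \<le> K * g\<^sup>2 * s"
        by (simp add: abs_mult flip: right_diff_distrib)
      then show "grad (z + s *\<^sub>R d) \<bullet> d - grad (z + 0 *\<^sub>R d) \<bullet> d \<le> K * g\<^sup>2 * s"
        unfolding e by (simp add: d_def)
    qed
    then show ?thesis using gd by (simp add: mult.commute mult.left_commute)
  qed
  have suff: "f (z + \<beta> *\<^sub>R d) \<le> f z + \<gamma> * \<beta> * (grad z \<bullet> d)"
    if b: "\<beta> \<ge> 0" and c: "K * \<beta> \<le> 2 * (1 - \<gamma>)" for \<beta>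
  proof -
    have "\<beta> * g\<^sup>2 * (K * \<beta> / 2 - (1 - \<gamma>)) \<le> 0"
      using b c by (intro mult_nonneg_nonpos) auto
    then have "\<beta> * (- (g\<^sup>2)) + K * g\<^sup>2 * \<beta>\<^sup>2 / 2 \<le> \<gamma> * \<beta> * (- (g\<^sup>2))"
      by (simp add: algebra_simps power2_eq_square)
    then show ?thesis using desc[OF b] gd by simp
  qed
  have Pg0: "g = 0 \<Longrightarrow> P m" for m unfolding P_def d_def by simp
  have ex: "\<exists>m. P m"
  proof (cases "g = 0 \<or> K * Delta = 0")
    case True
    then show ?thesis
    proof
      assume "g = 0" then show ?thesis using Pg0 by blast
    next
      assume "K * Delta = 0"
      then have "P 0" unfolding P_def using suff[of Delta] D0 gam by force
      then show ?thesis by blast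
    qed
  next
    case False
    then have KD: "K * Delta > 0" using K0 D0 by (simp add: less_le)
    obtain m where m: "\<delta> ^ m < 2 * (1 - \<gamma>) / (K * Delta)"
      using real_arch_pow_inv[of "2 * (1 - \<gamma>) / (K * Delta)" \<delta>] KD gam del by auto
    then have "K * Delta * \<delta> ^ m \<le> 2 * (1 - \<gamma>)" using KD by (simp add: field_simps)
    then have "P m" unfolding P_def using suff[of "Delta * \<delta> ^ m"] D0 del
      by (simp add: mult.assoc)
    then show ?thesis by blast
  qed
  define m0 where "m0 = (LEAST m. P m)"
  have Pm0: "P m0" unfolding m0_def using ex by (metis LeastI)
  have nP: "m < m0 \<Longrightarrow> \<not> P m" for m unfolding m0_def by (rule not_less_Least)
  have al3: "\<alpha> = Delta * \<delta> ^ m0" using al2 m0_def by simp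
  have dpow: "\<delta> ^ m0 \<le> 1" "0 \<le> \<delta> ^ m0" using del by (auto simp: power_le_one)
  have r1: "0 \<le> \<alpha> \<and> \<alpha> \<le> Delta" using al3 dpow D0 by (simp add: mult_left_le)
  have ra: "\<alpha> = Delta" if h: "K = 0 \<or> Delta \<le> 2 * (1 - \<gamma>) / K"
  proof -
    have "P 0"
    proof (cases "K = 0")
      case True then show ?thesis using Kg Pg0 by blast
    next
      case False
      then have "K * Delta \<le> 2 * (1 - \<gamma>)" using h K0 by (simp add: field_simps)
      then show ?thesis unfolding P_def using suff[of Delta] D0 by simp
    qed
    then have "m0 = 0" using nP by blast
    then show ?thesis using al3 by simp
  qed
  have rb: "2 * \<delta> * (1 - \<gamma>) / K < \<alpha>" if h: "K \<noteq> 0" "Delta > 2 * (1 - \<gamma>) / K"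
  proof -
    have Kp: "K > 0" using h K0 by simp
    have q: "2 * \<delta> * (1 - \<gamma>) / K = \<delta> * (2 * (1 - \<gamma>) / K)" by simp
    show ?thesis
    proof (cases m0)
      case 0
      have "2 * \<delta> * (1 - \<gamma>) / K \<le> 2 * (1 - \<gamma>) / K"
      proof (rule divide_right_mono)
        have "0 \<le> 2 * (1 - \<gamma>) * (1 - \<delta>)" using del gam by simp
        then show "2 * \<delta> * (1 - \<gamma>) \<le> 2 * (1 - \<gamma>)" by (simp add: algebra_simps)
      qed (use Kp in simp)
      then show ?thesis using h al3 0 by simp
    next
      case (Suc m')
      then have "\<not> P m'" using nP by simp
      then have "\<not> (K * (Delta * \<delta> ^ m') \<le> 2 * (1 - \<gamma>))"
        using suff[of "Delta * \<delta> ^ m'"] D0 del unfolding P_def by auto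
      then have "2 * (1 - \<gamma>) / K < Delta * \<delta> ^ m'" using Kp by (simp add: field_simps)
      then have "\<delta> * (2 * (1 - \<gamma>) / K) < \<delta> * (Delta * \<delta> ^ m')" using del by (intro mult_strict_left_mono) auto
      then show ?thesis using q al3 Suc by (simp add: mult_ac)
    qed
  qed
  have rc: "\<alpha> \<ge> (if K = 0 then Delta else min Delta (2 * \<delta> * (1 - \<gamma>) / K))"
    using ra rb by (cases "K = 0"; cases "Delta \<le> 2 * (1 - \<gamma>) / K") (auto simp: not_le)
  show ?thesis using r1 ra rb rc unfolding K_def by auto
qed

lemma ediv_nonneg: "0 \<le> (X::ereal) \<Longrightarrow> 0 < g \<Longrightarrow> 0 \<le> X / ereal g"
  by (cases X) auto

lemma ediv_le: "ereal \<alpha> \<le> X / ereal c \<Longrightarrow> c > 0 \<Longrightarrow> ereal (\<alpha> * c) \<le> X"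
  by (cases X) (auto simp: field_simps)

lemma ediff1: "ereal t \<le> U - ereal a \<Longrightarrow> ereal (a + t) \<le> U"
  by (cases U) auto

lemma ediff2: "ereal t \<le> ereal a - Lw \<Longrightarrow> Lw \<le> ereal (a - t)"
  by (cases Lw) auto

lemma ediff_nonneg: "ereal a \<le> U \<Longrightarrow> 0 \<le> U - ereal a"
  by (cases U) auto

lemma ediff_nonneg2: "Lw \<le> ereal a \<Longrightarrow> Lw \<noteq> \<infinity> \<Longrightarrow> 0 \<le> ereal a - Lw"
  by (cases Lw) auto

lemma delta_facts:
  fixes y :: "real ^ 'n::finite"
  assumes box: "\<forall>h. l $ h \<le> ereal (y $ h) \<and> ereal (y $ h) \<le> u $ h"
    and lu: "\<forall>i. l $ i \<noteq> \<infinity> \<and> u $ i \<noteq> -\<infinity>"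
    and A: "0 < A"
    and D: "Delta = real_of_ereal (min (alpha_bar l u y p j g) (ereal A))"
  shows "0 \<le> Delta \<and> ereal Delta \<le> alpha_bar l u y p j g"
proof -
  have ab: "0 \<le> alpha_bar l u y p j g"
  proof -
    have "0 \<le> min (u $ p - ereal (y $ p)) (ereal (y $ j) - l $ j)"
      using box lu by (simp add: ediff_nonneg ediff_nonneg2)
    moreover have "0 \<le> min (ereal (y $ p) - l $ p) (u $ j - ereal (y $ j))"
      using box lu by (simp add: ediff_nonneg ediff_nonneg2)
    ultimately show ?thesis unfolding alpha_bar_def
      by (auto intro!: ediv_nonneg)
  qed
  define m where "m = min (alpha_bar l u y p j g) (ereal A)"
  have m1: "0 \<le> m" "m \<le> ereal A" using ab A unfolding m_def by auto
  then obtain r where r: "m = ereal r" by (cases m) auto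
  have "Delta = r" using D r m_def by simp
  moreover have "m \<le> alpha_bar l u y p j g" unfolding m_def by simp
  ultimately show ?thesis using m1 r by auto
qed

lemma box_step:
  fixes y :: "real ^ 'n::finite"
  assumes box: "\<forall>h. l $ h \<le> ereal (y $ h) \<and> ereal (y $ h) \<le> u $ h"
    and g: "g = gval grad y p j"
    and a0: "0 \<le> \<alpha>" and ab: "ereal \<alpha> \<le> alpha_bar l u y p j g"
  shows "\<forall>h. l $ h \<le> ereal ((y + (\<alpha> * g) *\<^sub>R (axis p 1 - axis j 1)) $ h)
          \<and> ereal ((y + (\<alpha> * g) *\<^sub>R (axis p 1 - axis j 1)) $ h) \<le> u $ h"
proof (cases "p = j")
  case True then show ?thesis using box by simp
next
  case pj: False
  have comp: "(y + (\<alpha> * g) *\<^sub>R (axis p 1 - axis j 1)) $ h =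
      (if h = p then y $ h + \<alpha> * g else if h = j then y $ h - \<alpha> * g else y $ h)" for h
    using pj by (auto simp: axis_def)
  consider "g > 0" | "g < 0" | "g = 0" by linarith
  then show ?thesis
  proof cases
    case 1
    have "ereal (\<alpha> * g) \<le> min (u $ p - ereal (y $ p)) (ereal (y $ j) - l $ j)"
      using ab 1 unfolding alpha_bar_def by (intro ediv_le) auto
    then have e1: "ereal (y $ p + \<alpha> * g) \<le> u $ p" and e2: "l $ j \<le> ereal (y $ j - \<alpha> * g)"
      by (auto intro: ediff1 ediff2)
    have n: "0 \<le> \<alpha> * g" using a0 1 by simp
    have "ereal (y $ j - \<alpha> * g) \<le> ereal (y $ j)" using n by simp
    then have e3: "ereal (y $ j - \<alpha> * g) \<le> u $ j" using box by (meson order_trans)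
    have "ereal (y $ p) \<le> ereal (y $ p + \<alpha> * g)" using n by simp
    then have e4: "l $ p \<le> ereal (y $ p + \<alpha> * g)" using box by (meson order_trans)
    show ?thesis
    proof
      fix h
      show "l $ h \<le> ereal ((y + (\<alpha> * g) *\<^sub>R (axis p 1 - axis j 1)) $ h)
          \<and> ereal ((y + (\<alpha> * g) *\<^sub>R (axis p 1 - axis j 1)) $ h) \<le> u $ h"
        unfolding comp using box[rule_format, of h] e1 e2 e3 e4 by auto
    qed
  next
    case 2
    have "ereal (\<alpha> * \<bar>g\<bar>) \<le> min (ereal (y $ p) - l $ p) (u $ j - ereal (y $ j))"
      using ab 2 unfolding alpha_bar_def by (intro ediv_le) auto
    then have e1: "ereal (y $ j + \<alpha> * \<bar>g\<bar>) \<le> u $ j" and e2: "l $ p \<le> ereal (y $ p - \<alpha> * \<bar>g\<bar>)"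
      by (auto intro: ediff1 ediff2)
    have n: "\<alpha> * g \<le> 0" using a0 2 by (simp add: mult_nonneg_nonpos)
    have ag: "\<alpha> * \<bar>g\<bar> = - (\<alpha> * g)" using 2 by simp
    have "ereal (y $ p + \<alpha> * g) \<le> ereal (y $ p)" using n by simp
    then have e3: "ereal (y $ p + \<alpha> * g) \<le> u $ p" using box by (meson order_trans)
    have "ereal (y $ j) \<le> ereal (y $ j - \<alpha> * g)" using n by simp
    then have e4: "l $ j \<le> ereal (y $ j - \<alpha> * g)" using box by (meson order_trans)
    show ?thesis
    proof
      fix h
      show "l $ h \<le> ereal ((y + (\<alpha> * g) *\<^sub>R (axis p 1 - axis j 1)) $ h)
          \<and> ereal ((y + (\<alpha> * g) *\<^sub>R (axis p 1 - axis j 1)) $ h) \<le> u $ h"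
        unfolding comp using box[rule_format, of h] e1 e2 e3 e4 unfolding ag by auto
    qed
  next
    case 3 then show ?thesis using box by simp
  qed
qed


theorem lemma1:
  fixes f :: "real ^ 'n::finite \<Rightarrow> real"
    and grad :: "real ^ 'n \<Rightarrow> real ^ 'n"
    and L :: real
    and Lij :: "'n \<Rightarrow> 'n \<Rightarrow> real"
    and l u :: "ereal ^ 'n"
    and b :: real
    and \<tau> \<gamma> \<delta> A_l A_u :: real
    and x0 :: "real ^ 'n"
    and x :: "nat \<Rightarrow> real ^ 'n"
    and jk :: "nat \<Rightarrow> 'n"
    and pk :: "nat \<Rightarrow> nat \<Rightarrow> 'n"
    and z :: "nat \<Rightarrow> nat \<Rightarrow> real ^ 'n"
    and A Delta \<alpha> :: "nat \<Rightarrow> nat \<Rightarrow> real"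
  assumes n2: "CARD('n) \<ge> 2"
    and lu: "\<forall>i. l $ i < u $ i \<and> l $ i \<noteq> \<infinity> \<and> u $ i \<noteq> -\<infinity>"
    and deriv: "\<forall>y. (f has_derivative (\<lambda>h. grad y \<bullet> h)) (at y)"
    and lip: "\<forall>y y'. norm (grad y - grad y') \<le> L * dist y y'"
    and Lij_pos: "\<forall>i j. i \<noteq> j \<longrightarrow> Lij i j > 0"
    and Lij_diag: "\<forall>i. Lij i i = 0"
    and Lij_lip: "\<forall>i j y s t. \<bar>grad (y + s *\<^sub>R (axis i 1 - axis j 1)) \<bullet> (axis i 1 - axis j 1)
                                 - grad (y + t *\<^sub>R (axis i 1 - axis j 1)) \<bullet> (axis i 1 - axis j 1)\<bar>
                              \<le> Lij i j * \<bar>s - t\<bar>"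
    and params: "0 < \<tau> \<and> \<tau> \<le> 1 \<and> 0 < \<gamma> \<and> \<gamma> < 1 \<and> 0 < \<delta> \<and> \<delta> < 1 \<and> 0 < A_l \<and> A_l \<le> A_u"
    and x0F: "x0 \<in> feasible l u b"
    and level_ne: "{y \<in> feasible l u b. f y \<le> f x0} \<noteq> {}"
    and level_cpt: "compact {y \<in> feasible l u b. f y \<le> f x0}"
    and level_free: "\<forall>y \<in> {y \<in> feasible l u b. f y \<le> f x0}. \<exists>i. l $ i < ereal (y $ i) \<and> ereal (y $ i) < u $ i"
    and x_init: "x 0 = x0"
    and j_choice: "\<forall>k. Dist l u (x k) (jk k) \<ge> ereal \<tau> * Max (range (Dist l u (x k)))"
    and p_perm: "\<forall>k. bij_betw (pk k) {1..CARD('n)} (UNIV :: 'n set)"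
    and z_init: "\<forall>k. z k 1 = x k"
    and A_range: "\<forall>k. \<forall>i\<in>{1..CARD('n)}. A_l \<le> A k i \<and> A k i \<le> A_u"
    and Delta_def: "\<forall>k. \<forall>i\<in>{1..CARD('n)}.
        Delta k i = real_of_ereal (min (alpha_bar l u (z k i) (pk k i) (jk k)
                                          (gval grad (z k i) (pk k i) (jk k))) (ereal (A k i)))"
    and alpha_def: "\<forall>k. \<forall>i\<in>{1..CARD('n)}.
        \<alpha> k i = armijo f grad (z k i)
                   (gval grad (z k i) (pk k i) (jk k) *\<^sub>R (axis (pk k i) 1 - axis (jk k) 1))
                   (Delta k i) \<gamma> \<delta>"
    and z_step: "\<forall>k. \<forall>i\<in>{1..CARD('n)}.
        z k (i + 1) = z k i + (\<alpha> k i * gval grad (z k i) (pk k i) (jk k)) *\<^sub>R (axis (pk k i) 1 - axis (jk k) 1)"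
    and x_step: "\<forall>k. x (Suc k) = z k (CARD('n) + 1)"
  shows "\<forall>k. \<forall>i\<in>{1..CARD('n)}.
           (let p = pk k i; j = jk k in
             ((Lij p j = 0 \<or> Delta k i \<le> 2 * (1 - \<gamma>) / Lij p j) \<longrightarrow> \<alpha> k i = Delta k i)
           \<and> ((Lij p j \<noteq> 0 \<and> Delta k i > 2 * (1 - \<gamma>) / Lij p j) \<longrightarrow>
                 2 * \<delta> * (1 - \<gamma>) / Lij p j < \<alpha> k i \<and> \<alpha> k i \<le> Delta k i)
           \<and> \<alpha> k i \<ge> (if Lij p j = 0 then Delta k i else min (Delta k i) (2 * \<delta> * (1 - \<gamma>) / Lij p j)))"
proof -
  define B where "B y \<longleftrightarrow> (\<forall>h. l $ h \<le> ereal (y $ h) \<and> ereal (y $ h) \<le> u $ h)" for y :: "real ^ 'n"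
  have lu': "\<forall>i. l $ i \<noteq> \<infinity> \<and> u $ i \<noteq> -\<infinity>" using lu by blast
  have gam: "0 < \<gamma>" "\<gamma> < 1" and del: "0 < \<delta>" "\<delta> < 1" using params by auto
  have Apos: "0 < A k i" if "i \<in> {1..CARD('n)}" for k i
  proof -
    have "A_l \<le> A k i" using A_range that by blast
    then show ?thesis using params by linarith
  qed
  have Dfacts: "0 \<le> Delta k i \<and> ereal (Delta k i) \<le> alpha_bar l u (z k i) (pk k i) (jk k) (gval grad (z k i) (pk k i) (jk k))"
    if "i \<in> {1..CARD('n)}" "B (z k i)" for k i
    using delta_facts[of l "z k i" u "A k i" "Delta k i" "pk k i" "jk k" "gval grad (z k i) (pk k i) (jk k)"]
      that Apos[OF that(1)] lu' Delta_def unfolding B_def by blast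
  have Afacts: "0 \<le> \<alpha> k i \<and> \<alpha> k i \<le> Delta k i \<and>
           ((Lij (pk k i) (jk k) = 0 \<or> Delta k i \<le> 2 * (1 - \<gamma>) / Lij (pk k i) (jk k)) \<longrightarrow> \<alpha> k i = Delta k i)
           \<and> ((Lij (pk k i) (jk k) \<noteq> 0 \<and> Delta k i > 2 * (1 - \<gamma>) / Lij (pk k i) (jk k)) \<longrightarrow>
                 2 * \<delta> * (1 - \<gamma>) / Lij (pk k i) (jk k) < \<alpha> k i \<and> \<alpha> k i \<le> Delta k i)
           \<and> \<alpha> k i \<ge> (if Lij (pk k i) (jk k) = 0 then Delta k i else min (Delta k i) (2 * \<delta> * (1 - \<gamma>) / Lij (pk k i) (jk k)))"
    if "i \<in> {1..CARD('n)}" "B (z k i)" for k i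
    by (rule armijo_lemma[OF deriv Lij_pos Lij_lip gam del])
       (use Dfacts[OF that] alpha_def that(1) in auto)
  have stepB: "B (z k (i + 1))" if "i \<in> {1..CARD('n)}" "B (z k i)" for k i
  proof -
    have a: "0 \<le> \<alpha> k i" "\<alpha> k i \<le> Delta k i" using Afacts[OF that] by auto
    have "ereal (\<alpha> k i) \<le> ereal (Delta k i)" using a by simp
    then have b: "ereal (\<alpha> k i) \<le> alpha_bar l u (z k i) (pk k i) (jk k) (gval grad (z k i) (pk k i) (jk k))"
      using Dfacts[OF that] by (meson order_trans)
    have "B (z k i + (\<alpha> k i * gval grad (z k i) (pk k i) (jk k)) *\<^sub>R (axis (pk k i) 1 - axis (jk k) 1))"
      using box_step[OF _ refl a(1) b] that(2) unfolding B_def by blast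
    then show ?thesis using z_step that(1) by simp
  qed
  have inner: "B (x k) \<Longrightarrow> \<forall>i. 1 \<le> i \<longrightarrow> i \<le> CARD('n) + 1 \<longrightarrow> B (z k i)" for k
  proof -
    assume bx: "B (x k)"
    show "\<forall>i. 1 \<le> i \<longrightarrow> i \<le> CARD('n) + 1 \<longrightarrow> B (z k i)"
    proof (intro allI)
      fix i show "1 \<le> i \<longrightarrow> i \<le> CARD('n) + 1 \<longrightarrow> B (z k i)"
      proof (induction i)
        case 0 then show ?case by simp
      next
        case (Suc i)
        show ?case
        proof (cases "i = 0")
          case True then show ?thesis using bx z_init by simp
        next
          case False
          show ?thesis
          proof (intro impI)
            assume "Suc i \<le> CARD('n) + 1"
            then have iin: "i \<in> {1..CARD('n)}" using False by simp
            then have "B (z k i)" using Suc.IH by simp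
            then show "B (z k (Suc i))" using stepB[OF iin] by simp
          qed
        qed
      qed
    qed
  qed
  have bx: "B (x k)" for k
  proof (induction k)
    case 0 then show ?case using x0F x_init unfolding B_def feasible_def by simp
  next
    case (Suc k)
    then show ?case using inner[OF Suc] x_step by simp
  qed
  show ?thesis
  proof (intro allI ballI)
    fix k i assume iin: "i \<in> {1..CARD('n)}"
    have "B (z k i)" using inner[OF bx] iin by simp
    then show "let p = pk k i; j = jk k in
             ((Lij p j = 0 \<or> Delta k i \<le> 2 * (1 - \<gamma>) / Lij p j) \<longrightarrow> \<alpha> k i = Delta k i)
           \<and> ((Lij p j \<noteq> 0 \<and> Delta k i > 2 * (1 - \<gamma>) / Lij p j) \<longrightarrow>
                 2 * \<delta> * (1 - \<gamma>) / Lij p j < \<alpha> k i \<and> \<alpha> k i \<le> Delta k i)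
           \<and> \<alpha> k i \<ge> (if Lij p j = 0 then Delta k i else min (Delta k i) (2 * \<delta> * (1 - \<gamma>) / Lij p j))"
      using Afacts[OF iin] unfolding Let_def by blast
  qed
qed

end
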